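(* Let $|\psi\rangle$ be the $N$-qubit linear cluster state ($N\ge2$) and $\rho_N(x)=(\mathbb{1}+x|\psi\rangle\langle\psi|)/(2^N+x)$. Measuring an end qubit in the $Z$-basis (with the corresponding local correction) maps $\rho_N(x)$ to $\rho_{N-1}(x/2)$; hence reducing to a two-qubit state by $Z$-measurements yields $\rho_2(x/2^{N-2})$. This two-qubit state is purifiable to a Bell pair if and only if the fidelity of the original state satisfies $$\langle\psi|\rho_N(x)|\psi\rangle>\frac13+\frac{1}{3\cdot2^{N-1}}.$$
   Context: The linear cluster state is the graph state of a path graph: the common $+1$ eigenstate of $K_i=X_i\prod_{\{i,j\}\in E}Z_j$. Known input: a two-qubit Bell-diagonal state with weight $\lambda_{00}$ on the target Bell state is purifiable iff $\lambda_{00}>1/2$. *)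

theory Defs
  imports Complex_Main "Jordan_Normal_Form.Matrix"
begin

text \<open>Computational basis index
  i < 2^N; qubit k (0-based, k < N) carries the bit (i div 2^k) mod 2.
  The linear cluster state has edges {k, k+1}, k+1 < N; qubit N-1 is an end qubit.\<close>

definition bit :: "nat \<Rightarrow> nat \<Rightarrow> nat" where
  "bit i k = (i div 2 ^ k) mod 2"

text \<open>Graph state of the path graph: the product of CZ over the edges applied to
  the uniform superposition (equivalently, the common +1 eigenstate of the
  stabilizers K_i = X_i prod Z_j).\<close>
definition cluster_vec :: "nat \<Rightarrow> complex vec" where
  "cluster_vec N = vec (2 ^ N)
     (\<lambda>i. complex_of_real ((-1) ^ (\<Sum>k<N - 1. bit i k * bit i (Suc k)) / sqrt (2 ^ N)))"

definition proj :: "complex vec \<Rightarrow> complex mat" where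
  "proj v = mat (dim_vec v) (dim_vec v) (\<lambda>(i, j). v $ i * cnj (v $ j))"

definition mtrace :: "complex mat \<Rightarrow> complex" where
  "mtrace A = (\<Sum>i<dim_row A. A $$ (i, i))"

definition rho :: "nat \<Rightarrow> real \<Rightarrow> complex mat" where
  "rho N x = complex_of_real (1 / (2 ^ N + x)) \<cdot>\<^sub>m
     (1\<^sub>m (2 ^ N) + complex_of_real x \<cdot>\<^sub>m proj (cluster_vec N))"

text \<open>Fidelity <psi|rho|psi> (real part; it is real for Hermitian rho).\<close>
definition fidelity :: "complex vec \<Rightarrow> complex mat \<Rightarrow> real" where
  "fidelity v A = Re (\<Sum>i<dim_vec v. \<Sum>j<dim_vec v. cnj (v $ i) * A $$ (i, j) * v $ j)"

definition pauliZ :: "nat \<Rightarrow> nat \<Rightarrow> complex mat" where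
  "pauliZ n k = mat (2 ^ n) (2 ^ n) (\<lambda>(i, j). if i = j then (-1) ^ bit i k else 0)"

text \<open>Z-basis measurement of the end qubit N-1 of an N-qubit state with outcome b:
  unnormalised post-measurement state (<b| rho |b>) on the remaining N-1 qubits.\<close>
definition zmeas_block :: "nat \<Rightarrow> nat \<Rightarrow> complex mat \<Rightarrow> complex mat" where
  "zmeas_block N b A = mat (2 ^ (N - 1)) (2 ^ (N - 1))
     (\<lambda>(i, j). A $$ (i + b * 2 ^ (N - 1), j + b * 2 ^ (N - 1)))"

definition zmeas_step :: "nat \<Rightarrow> nat \<Rightarrow> complex mat \<Rightarrow> complex mat" where
  "zmeas_step N b A =
     (let B = zmeas_block N b A;
          U = pauliZ (N - 1) (N - 2) ^\<^sub>m b
      in (1 / mtrace B) \<cdot>\<^sub>m (U * B * U))"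

fun zmeas_seq :: "nat \<Rightarrow> nat list \<Rightarrow> complex mat \<Rightarrow> complex mat" where
  "zmeas_seq N [] A = A"
| "zmeas_seq N (b # bs) A = zmeas_seq (N - 1) bs (zmeas_step N b A)"

text \<open>Bell-diagonal two-qubit state w.r.t. the target Bell state psi_2 (the two-qubit
  cluster state, locally equivalent to a standard Bell pair) and its basis
  Z^a (x) Z^c psi_2, with weight lambda_00 on the target. By the known input, such
  a state is purifiable to a Bell pair iff lambda_00 > 1/2.\<close>
definition bell_basis :: "nat \<Rightarrow> nat \<Rightarrow> complex vec" where
  "bell_basis a c = (pauliZ 2 0 ^\<^sub>m a * pauliZ 2 1 ^\<^sub>m c) *\<^sub>v cluster_vec 2"

definition purifiable :: "complex mat \<Rightarrow> bool" where
  "purifiable A \<longleftrightarrow> (\<exists>w :: nat \<Rightarrow> nat \<Rightarrow> real.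
      (\<forall>a<2. \<forall>c<2. w a c \<ge> 0) \<and>
      A = complex_of_real (w 0 0) \<cdot>\<^sub>m proj (bell_basis 0 0)
        + complex_of_real (w 0 1) \<cdot>\<^sub>m proj (bell_basis 0 1)
        + complex_of_real (w 1 0) \<cdot>\<^sub>m proj (bell_basis 1 0)
        + complex_of_real (w 1 1) \<cdot>\<^sub>m proj (bell_basis 1 1) \<and>
      w 0 0 > 1 / 2)"

end

theory Submission imports Defs begin

definition dmat :: "nat \<Rightarrow> (nat \<Rightarrow> complex) \<Rightarrow> complex mat" where
  "dmat n d = mat n n (\<lambda>(i,j). if i = j then d i else 0)"

lemma dmat_dims[simp]: "dim_row (dmat n d) = n" "dim_col (dmat n d) = n"
  by (auto simp: dmat_def)

lemma dmat_index[simp]: "i < n \<Longrightarrow> j < n \<Longrightarrow> dmat n d $$ (i,j) = (if i = j then d i else 0)"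
  by (simp add: dmat_def)

lemma dmat_mult_left:
  assumes "dim_row A = n" "i < n" "j < dim_col A"
  shows "(dmat n d * A) $$ (i,j) = d i * A $$ (i,j)"
proof -
  have "(dmat n d * A) $$ (i,j) = (\<Sum>k\<in>{0..<n}. (if i = k then d i else 0) * A $$ (k,j))"
    using assms by (simp add: scalar_prod_def)
  also have "\<dots> = (\<Sum>k\<in>{0..<n}. if k = i then d i * A $$ (i,j) else 0)"
    by (rule sum.cong) auto
  also have "\<dots> = d i * A $$ (i,j)" using assms by simp
  finally show ?thesis .
qed

lemma dmat_mult_right:
  assumes "dim_col A = n" "i < dim_row A" "j < n"
  shows "(A * dmat n d) $$ (i,j) = A $$ (i,j) * d j"
proof -
  have "(A * dmat n d) $$ (i,j) = (\<Sum>k\<in>{0..<n}. A $$ (i,k) * (if k = j then d k else 0))"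
    using assms by (simp add: scalar_prod_def)
  also have "\<dots> = (\<Sum>k\<in>{0..<n}. if k = j then A $$ (i,j) * d j else 0)"
    by (rule sum.cong) auto
  also have "\<dots> = A $$ (i,j) * d j" using assms by simp
  finally show ?thesis .
qed

lemma dmat_mult_vec:
  assumes "dim_vec v = n" "i < n"
  shows "(dmat n d *\<^sub>v v) $ i = d i * v $ i"
proof -
  have "(dmat n d *\<^sub>v v) $ i = (\<Sum>k\<in>{0..<n}. (if i = k then d i else 0) * v $ k)"
    using assms by (simp add: scalar_prod_def)
  also have "\<dots> = (\<Sum>k\<in>{0..<n}. if k = i then d i * v $ i else 0)"
    by (rule sum.cong) auto
  also have "\<dots> = d i * v $ i" using assms by simp
  finally show ?thesis .
qed

lemma dmat_mult_dmat: "dmat n d * dmat n e = dmat n (\<lambda>i. d i * e i)"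
proof (rule eq_matI)
  fix i j assume "i < dim_row (dmat n (\<lambda>i. d i * e i))" "j < dim_col (dmat n (\<lambda>i. d i * e i))"
  then have ij: "i < n" "j < n" by auto
  have "(dmat n d * dmat n e) $$ (i,j) = d i * dmat n e $$ (i,j)"
    by (rule dmat_mult_left) (use ij in auto)
  then show "(dmat n d * dmat n e) $$ (i,j) = dmat n (\<lambda>i. d i * e i) $$ (i,j)" using ij by simp
qed auto

lemma one_dmat: "1\<^sub>m n = dmat n (\<lambda>_. 1)"
  by (rule eq_matI) auto

lemma pow_dmat: "dmat n d ^\<^sub>m k = dmat n (\<lambda>i. d i ^ k)"
  by (induct k) (auto simp: one_dmat dmat_mult_dmat mult.commute)

lemma pauliZ_dmat: "pauliZ n k = dmat (2^n) (\<lambda>i. (-1) ^ bit i k)"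
  unfolding pauliZ_def dmat_def by simp

definition sN :: "nat \<Rightarrow> nat \<Rightarrow> nat" where
  "sN N i = (\<Sum>k<N - 1. bit i k * bit i (Suc k))"

definition pp :: "nat \<Rightarrow> nat \<Rightarrow> real" where
  "pp N i = (-1) ^ sN N i"

lemma neg1_sq: "((-1::real) ^ n) * (-1) ^ n = 1"
  by (cases "even n") auto

lemma pp_sq: "pp N i * pp N i = 1"
  unfolding pp_def by (rule neg1_sq)

lemma dim_cluster[simp]: "dim_vec (cluster_vec N) = 2 ^ N"
  by (simp add: cluster_vec_def)

lemma cluster_entry: "i < 2 ^ N \<Longrightarrow> cluster_vec N $ i = of_real (pp N i / sqrt (2 ^ N))"
  by (simp add: cluster_vec_def pp_def sN_def)

lemma proj_entry: "i < dim_vec v \<Longrightarrow> j < dim_vec v \<Longrightarrow> proj v $$ (i,j) = v $ i * cnj (v $ j)"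
  by (simp add: proj_def)

lemma dim_proj[simp]: "dim_row (proj v) = dim_vec v" "dim_col (proj v) = dim_vec v"
  by (auto simp: proj_def)

lemma dim_rho[simp]: "dim_row (rho N x) = 2 ^ N" "dim_col (rho N x) = 2 ^ N"
  by (auto simp: rho_def)

lemma of_real_if01: "(of_real (if P then 1 else 0) :: complex) = (if P then 1 else 0)"
  by simp

lemma rho_entry:
  assumes "i < 2 ^ N" "j < 2 ^ N"
  shows "rho N x $$ (i,j) = of_real (((if i = j then 1 else 0) + x * pp N i * pp N j / 2 ^ N) / (2 ^ N + x))"
proof -
  have sq: "sqrt (2 ^ N) * sqrt (2 ^ N) = (2::real) ^ N" by simp
  have "rho N x $$ (i,j) = of_real (1 / (2 ^ N + x)) * ((if i = j then 1 else 0) +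
      of_real x * (of_real (pp N i / sqrt (2 ^ N)) * cnj (of_real (pp N j / sqrt (2 ^ N)))))"
    using assms by (simp add: rho_def proj_entry cluster_entry)
  also have "\<dots> = of_real (1 / (2 ^ N + x) * ((if i = j then 1 else 0) +
      x * (pp N i / sqrt (2 ^ N) * (pp N j / sqrt (2 ^ N)))))"
    by (simp only: of_real_mult of_real_add complex_cnj_complex_of_real of_real_if01)
  also have "pp N i / sqrt (2 ^ N) * (pp N j / sqrt (2 ^ N)) = pp N i * pp N j / 2 ^ N"
    using sq by (simp add: field_simps)
  finally have "rho N x $$ (i,j) = of_real (1 / (2 ^ N + x) * ((if i = j then 1 else 0) + x * (pp N i * pp N j / 2 ^ N)))" .
  moreover have "1 / (2 ^ N + x) * ((if i = j then 1 else 0) + x * (pp N i * pp N j / 2 ^ N))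
     = ((if i = j then 1 else 0) + x * pp N i * pp N j / 2 ^ N) / (2 ^ N + x)" by simp
  ultimately show ?thesis by simp
qed

lemma bit_low:
  assumes "i < 2 ^ m" "k < m"
  shows "bit (i + b * 2 ^ m) k = bit i k"
proof -
  have m: "(2::nat) ^ m = 2 ^ k * 2 * 2 ^ (m - k - 1)"
  proof -
    have "m = k + Suc (m - k - 1)" using assms(2) by simp
    then have "(2::nat) ^ m = 2 ^ k * 2 ^ Suc (m - k - 1)" by (metis power_add)
    then show ?thesis by simp
  qed
  have e: "i + b * 2 ^ m = i + (2 * (b * 2 ^ (m - k - 1))) * 2 ^ k"
    unfolding m by (simp add: mult.commute mult.left_commute)
  have "(i + b * 2 ^ m) div 2 ^ k = i div 2 ^ k + 2 * (b * 2 ^ (m - k - 1))"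
    unfolding e by simp
  then show ?thesis unfolding bit_def by simp
qed

lemma bit_top:
  assumes "i < 2 ^ m" "b < 2"
  shows "bit (i + b * 2 ^ m) m = b"
proof -
  have "(i + b * 2 ^ m) div 2 ^ m = i div 2 ^ m + b" by simp
  also have "i div 2 ^ m = 0" using assms by simp
  finally show ?thesis unfolding bit_def using assms by simp
qed

lemma sN_split:
  assumes "1 \<le> m" "i < 2 ^ m" "b < 2"
  shows "sN (Suc m) (i + b * 2 ^ m) = sN m i + b * bit i (m - 1)"
proof -
  define j where "j = i + b * 2 ^ m"
  obtain n where n: "m = Suc n" using assms(1) by (cases m) auto
  have "sN (Suc m) j = (\<Sum>k<Suc n. bit j k * bit j (Suc k))" by (simp add: sN_def n)
  also have "\<dots> = (\<Sum>k<n. bit j k * bit j (Suc k)) + bit j n * bit j (Suc n)" by simp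
  also have "(\<Sum>k<n. bit j k * bit j (Suc k)) = (\<Sum>k<n. bit i k * bit i (Suc k))"
  proof (rule sum.cong)
    fix k assume "k \<in> {..<n}"
    then have "k < m" "Suc k < m" using n by auto
    then show "bit j k * bit j (Suc k) = bit i k * bit i (Suc k)"
      unfolding j_def using bit_low[OF assms(2)] by simp
  qed simp
  also have "bit j n * bit j (Suc n) = bit i n * b"
  proof -
    have "bit j n = bit i n" unfolding j_def using bit_low[OF assms(2), of n] n by simp
    moreover have "bit j (Suc n) = b" unfolding j_def using bit_top[OF assms(2,3)] n by simp
    ultimately show ?thesis by simp
  qed
  finally show ?thesis by (simp add: j_def sN_def n)
qed

lemma pp_split:
  assumes "1 \<le> m" "i < 2 ^ m" "b < 2"
  shows "pp (Suc m) (i + b * 2 ^ m) = pp m i * (-1) ^ (b * bit i (m - 1))"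
  using sN_split[OF assms] by (simp add: pp_def power_add)

definition sg :: "nat \<Rightarrow> nat \<Rightarrow> nat \<Rightarrow> real" where
  "sg m b i = (-1) ^ (b * bit i (m - 1))"

lemma sg_sq: "sg m b i * sg m b i = 1"
  unfolding sg_def by (rule neg1_sq)

lemma block_entry:
  assumes "1 \<le> m" "i < 2 ^ m" "j < 2 ^ m" "b < 2"
  shows "zmeas_block (Suc m) b (rho (Suc m) x) $$ (i,j) =
    of_real (((if i = j then 1 else 0) + x * (sg m b i * pp m i) * (sg m b j * pp m j) / 2 ^ Suc m) / (2 ^ Suc m + x))"
proof -
  have lt: "k + b * 2 ^ m < 2 ^ Suc m" if "k < 2 ^ m" for k
    using that assms(4) by (cases b) auto
  have "zmeas_block (Suc m) b (rho (Suc m) x) $$ (i,j) = rho (Suc m) x $$ (i + b * 2 ^ m, j + b * 2 ^ m)"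
    using assms by (simp add: zmeas_block_def)
  also have "\<dots> = of_real (((if i + b * 2 ^ m = j + b * 2 ^ m then 1 else 0) +
      x * pp (Suc m) (i + b * 2 ^ m) * pp (Suc m) (j + b * 2 ^ m) / 2 ^ Suc m) / (2 ^ Suc m + x))"
    by (rule rho_entry) (use lt assms in auto)
  also have "\<dots> = of_real (((if i = j then 1 else 0) + x * (sg m b i * pp m i) * (sg m b j * pp m j) / 2 ^ Suc m) / (2 ^ Suc m + x))"
    using pp_split[OF assms(1) assms(2) assms(4)] pp_split[OF assms(1) assms(3) assms(4)]
    by (simp add: sg_def mult.commute)
  finally show ?thesis .
qed

lemma dim_block[simp]: "dim_row (zmeas_block N b A) = 2 ^ (N - 1)" "dim_col (zmeas_block N b A) = 2 ^ (N - 1)"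
  by (auto simp: zmeas_block_def)

lemma trace_block:
  assumes "1 \<le> m" "b < 2" "x \<ge> -1"
  shows "mtrace (zmeas_block (Suc m) b (rho (Suc m) x)) = of_real (1/2)"
proof -
  have pos: "(2::real) ^ Suc m + x > 0"
  proof -
    have "(2::real) ^ Suc m \<ge> 2" by (metis Suc_le_mono One_nat_def assms(1) power_increasing power_one_right zero_less_Suc less_Suc_eq_le one_le_numeral)
    then show ?thesis using assms(3) by linarith
  qed
  have "mtrace (zmeas_block (Suc m) b (rho (Suc m) x)) =
    (\<Sum>i<(2::nat) ^ m. of_real ((1 + x / 2 ^ Suc m) / (2 ^ Suc m + x)))"
    unfolding mtrace_def dim_block
  proof (simp only: diff_Suc_1, rule sum.cong)
    fix i :: nat assume "i \<in> {..<2 ^ m}"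
    then have i: "i < 2 ^ m" by simp
    have "x * (sg m b i * pp m i) * (sg m b i * pp m i) = x * ((sg m b i * sg m b i) * (pp m i * pp m i))"
      by (simp add: algebra_simps)
    then have e: "x * (sg m b i * pp m i) * (sg m b i * pp m i) = x" by (simp add: sg_sq pp_sq)
    show "zmeas_block (Suc m) b (rho (Suc m) x) $$ (i, i) = of_real ((1 + x / 2 ^ Suc m) / (2 ^ Suc m + x))"
      using block_entry[OF assms(1) i i assms(2), where x=x] unfolding e by simp
  qed simp
  also have "\<dots> = of_real (2 ^ m * ((1 + x / 2 ^ Suc m) / (2 ^ Suc m + x)))" by simp
  also have "2 ^ m * ((1 + x / 2 ^ Suc m) / (2 ^ Suc m + x)) = (1/2::real)"
  proof -
    have P: "(2::real) ^ Suc m \<noteq> 0" by simp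
    have "1 + x / 2 ^ Suc m = (2 ^ Suc m + x) / 2 ^ Suc m" using P by (simp add: field_simps)
    then have "(1 + x / 2 ^ Suc m) / (2 ^ Suc m + x) = 1 / 2 ^ Suc m" using pos by simp
    then show ?thesis by simp
  qed
  finally show ?thesis .
qed

lemma step_arith:
  fixes si sj pi pj x M :: real
  assumes "si * si = 1" "sj * sj = 1" "pi * pi = 1" "M > 0" "2 * M + x > 0" "d = 0 \<or> (d = 1 \<and> si = sj \<and> pi = pj)"
  shows "2 * (si * ((d + x * (si * pi) * (sj * pj) / (2 * M)) / (2 * M + x)) * sj) = (d + x / 2 * pi * pj / M) / (M + x / 2)"
proof -
  have M2: "M + x / 2 = (2 * M + x) / 2" by simp
  show ?thesis using assms(6)
  proof
    assume d: "d = 0"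
    have "si * (x * (si * pi) * (sj * pj)) * sj = x * (si * si) * (sj * sj) * (pi * pj)" by (simp add: algebra_simps)
    then have e: "si * (x * (si * pi) * (sj * pj)) * sj = x * (pi * pj)" using assms by simp
    have "2 * (si * ((x * (si * pi) * (sj * pj) / (2 * M)) / (2 * M + x)) * sj) = 2 * (si * (x * (si * pi) * (sj * pj)) * sj) / (2 * M) / (2 * M + x)"
      by simp
    also have "\<dots> = 2 * (x * (pi * pj)) / (2 * M) / (2 * M + x)" unfolding e ..
    also have "\<dots> = (x / 2 * pi * pj / M) / (M + x / 2)" unfolding M2 using assms(4,5) by (simp add: field_simps)
    finally show ?thesis using d by simp
  next
    assume d: "d = 1 \<and> si = sj \<and> pi = pj"
    have e: "x * (si * pi) * (si * pi) = x" using assms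
      by (metis mult.assoc mult.commute mult.left_commute mult_1_right)
    have "2 * (si * ((1 + x * (si * pi) * (si * pi) / (2 * M)) / (2 * M + x)) * si) = 2 * (si * si) * ((1 + x / (2 * M)) / (2 * M + x))"
      unfolding e by (simp add: algebra_simps)
    also have "\<dots> = (1 + x / 2 * pi * pi / M) / (M + x / 2)" unfolding M2 using assms by (simp add: field_simps)
    finally show ?thesis using d by simp
  qed
qed

lemma sg_complex: "((-1::complex) ^ bit i (m - 1)) ^ b = of_real (sg m b i)"
  unfolding sg_def by (simp add: power_mult[symmetric] mult.commute)

lemma step_lemma:
  assumes m: "1 \<le> m" and b: "b < 2" and x: "x \<ge> -1"
  shows "zmeas_step (Suc m) b (rho (Suc m) x) = rho m (x / 2)"
proof -
  define B where "B = zmeas_block (Suc m) b (rho (Suc m) x)"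
  define U where "U = dmat (2 ^ m) (\<lambda>i. of_real (sg m b i))"
  have U: "pauliZ (Suc m - 1) (Suc m - 2) ^\<^sub>m b = U"
  proof -
    have e: "Suc m - 2 = m - 1" "Suc m - 1 = m" by auto
    show ?thesis unfolding U_def pauliZ_dmat pow_dmat e sg_complex by simp
  qed
  have tr: "mtrace B = of_real (1/2)" unfolding B_def by (rule trace_block[OF m b x])
  have zs: "zmeas_step (Suc m) b (rho (Suc m) x) = 2 \<cdot>\<^sub>m (U * B * U)"
    unfolding zmeas_step_def Let_def B_def[symmetric] U tr by simp
  have Mpos: "(2::real) ^ m > 0" by simp
  have pos: "2 * (2::real) ^ m + x > 0"
  proof -
    have "(2::real) ^ m \<ge> 2 ^ 1" by (rule power_increasing) (use m in auto)
    then show ?thesis using x by simp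
  qed
  show ?thesis unfolding zs
  proof (rule eq_matI)
    fix i j assume "i < dim_row (rho m (x / 2))" "j < dim_col (rho m (x / 2))"
    then have i: "i < 2 ^ m" and j: "j < 2 ^ m" by auto
    have dB: "dim_row B = 2 ^ m" "dim_col B = 2 ^ m" unfolding B_def by auto
    have "(U * B * U) $$ (i,j) = (U * B) $$ (i,j) * of_real (sg m b j)"
      unfolding U_def by (rule dmat_mult_right) (use i j dB in auto)
    also have "(U * B) $$ (i,j) = of_real (sg m b i) * B $$ (i,j)"
      unfolding U_def by (rule dmat_mult_left) (use i j dB in auto)
    finally have eub: "(U * B * U) $$ (i,j) = of_real (sg m b i) * B $$ (i,j) * of_real (sg m b j)" .
    define E where "E = ((if i = j then 1 else 0) + x * (sg m b i * pp m i) * (sg m b j * pp m j) / (2 * 2 ^ m)) / (2 * 2 ^ m + (x::real))"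
    have eB: "B $$ (i,j) = of_real E" unfolding B_def E_def block_entry[OF m i j b] by simp
    have e0: "(2 \<cdot>\<^sub>m (U * B * U)) $$ (i,j) = 2 * (U * B * U) $$ (i,j)"
      using i j dB by (simp add: U_def)
    have e1: "(2 \<cdot>\<^sub>m (U * B * U)) $$ (i,j) = of_real (2 * (sg m b i * E * sg m b j))"
      unfolding e0 eub eB by simp
    have "2 * (sg m b i * E * sg m b j)
      = ((if i = j then 1 else 0) + x / 2 * pp m i * pp m j / 2 ^ m) / (2 ^ m + x / 2)"
      unfolding E_def by (rule step_arith) (use sg_sq pp_sq Mpos pos in auto)
    then show "(2 \<cdot>\<^sub>m (U * B * U)) $$ (i,j) = rho m (x / 2) $$ (i,j)"
      unfolding e1 rho_entry[OF i j] by simp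
  qed (auto simp: B_def U_def)
qed

definition bb :: "nat \<Rightarrow> nat \<Rightarrow> nat \<Rightarrow> real" where
  "bb a c i = (-1) ^ (a * bit i 0 + c * bit i 1) * pp 2 i / 2"

lemma dim_bell[simp]: "dim_vec (bell_basis a c) = 4"
  by (simp add: bell_basis_def pauliZ_dmat pow_dmat dmat_mult_dmat)

lemma bell_entry: "i < 4 \<Longrightarrow> bell_basis a c $ i = of_real (bb a c i)"
proof -
  assume i: "i < 4"
  have ce: "cluster_vec 2 $ i = of_real (pp 2 i / 2)" using cluster_entry[of i 2] i by simp
  have "bell_basis a c $ i = (((-1) ^ bit i 0) ^ a * ((-1) ^ bit i 1) ^ c) * cluster_vec 2 $ i"
    unfolding bell_basis_def pauliZ_dmat pow_dmat dmat_mult_dmat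
    by (rule dmat_mult_vec) (use i in auto)
  also have "\<dots> = of_real (bb a c i)"
    using i unfolding ce bb_def
    by (simp add: power_mult[symmetric] power_add mult.commute)
  finally show ?thesis .
qed


lemma proj_bell_entry: "i < 4 \<Longrightarrow> j < 4 \<Longrightarrow> proj (bell_basis a c) $$ (i,j) = of_real (bb a c i * bb a c j)"
  by (simp add: proj_entry bell_entry)

definition Smat :: "(nat \<Rightarrow> nat \<Rightarrow> real) \<Rightarrow> complex mat" where
  "Smat w = complex_of_real (w 0 0) \<cdot>\<^sub>m proj (bell_basis 0 0)
        + complex_of_real (w 0 1) \<cdot>\<^sub>m proj (bell_basis 0 1)
        + complex_of_real (w 1 0) \<cdot>\<^sub>m proj (bell_basis 1 0)
        + complex_of_real (w 1 1) \<cdot>\<^sub>m proj (bell_basis 1 1)"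

lemma dim_Smat[simp]: "dim_row (Smat w) = 4" "dim_col (Smat w) = 4"
  by (auto simp: Smat_def)

lemma Smat_entry: "i < 4 \<Longrightarrow> j < 4 \<Longrightarrow> Smat w $$ (i,j) = of_real (
    w 0 0 * (bb 0 0 i * bb 0 0 j) + w 0 1 * (bb 0 1 i * bb 0 1 j) +
    w 1 0 * (bb 1 0 i * bb 1 0 j) + w 1 1 * (bb 1 1 i * bb 1 1 j))"
  by (simp add: Smat_def proj_bell_entry)

lemma rho2_entry_real: "i < 4 \<Longrightarrow> j < 4 \<Longrightarrow> rho 2 y $$ (i,j) = of_real (((if i = j then 1 else 0) + y * pp 2 i * pp 2 j / 4) / (4 + y))"
  using rho_entry[of i 2 j y] by simp

lemma purif_only:
  assumes "rho 2 y = Smat w" "y \<ge> -1"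
  shows "w 0 0 = (1 + y) / (4 + y)"
proof -
  have e: "((if 0 = k then 1 else 0) + y * pp 2 0 * pp 2 k / 4) / (4 + y) =
    w 0 0 * (bb 0 0 0 * bb 0 0 k) + w 0 1 * (bb 0 1 0 * bb 0 1 k) +
    w 1 0 * (bb 1 0 0 * bb 1 0 k) + w 1 1 * (bb 1 1 0 * bb 1 1 k)" if "k < 4" for k
  proof -
    have "rho 2 y $$ (0,k) = Smat w $$ (0,k)" using assms by simp
    moreover have "rho 2 y $$ (0,k) = of_real (((if 0 = k then 1 else 0) + y * pp 2 0 * pp 2 k / 4) / (4 + y))"
      by (rule rho2_entry_real) (use that in auto)
    moreover have "Smat w $$ (0,k) = of_real (w 0 0 * (bb 0 0 0 * bb 0 0 k) + w 0 1 * (bb 0 1 0 * bb 0 1 k) +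
    w 1 0 * (bb 1 0 0 * bb 1 0 k) + w 1 1 * (bb 1 1 0 * bb 1 1 k))"
      by (rule Smat_entry) (use that in auto)
    ultimately show ?thesis using of_real_eq_iff by metis
  qed
  note es = e[of 0, simplified] e[of 1, simplified] e[of 2, simplified] e[of 3, simplified]
  have h: "(1 + y / 4) / (4 + y) = 3 * w 1 0 / 4 + w 0 0 / 4" "y / (16 + 4 * y) = w 0 0 / 4 - w 1 0 / 4"
    using es by (simp_all add: bb_def bit_def pp_def sN_def)
  have p: "4 + y \<noteq> 0" "16 + 4 * y \<noteq> 0" using assms(2) by auto
  have a1: "(1 + y / 4) / (4 + y) = 1 / 4" using p by (simp add: field_simps)
  have a2: "y / (16 + 4 * y) = y / (4 * (4 + y))" by simp
  have a3: "1 / 4 + 3 * (y / (4 * (4 + y))) = (1 + y) / (4 + y)" using p by (simp add: field_simps)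
  have "(1 + y / 4) / (4 + y) + 3 * (y / (16 + 4 * y)) = (1 + y) / (4 + y)"
    unfolding a1 a2 a3 ..
  then show ?thesis using h by linarith
qed


lemma purifiable_Smat: "purifiable A \<longleftrightarrow> (\<exists>w. (\<forall>a<2. \<forall>c<2. w a c \<ge> 0) \<and> A = Smat w \<and> w 0 0 > 1 / 2)"
  unfolding purifiable_def Smat_def ..

lemma less4: "(i::nat) < 4 \<Longrightarrow> i = 0 \<or> i = 1 \<or> i = 2 \<or> i = 3" by auto

lemma bb_vals: "bb a c 0 = 1/2" "bb a c 1 = (-1)^a/2" "bb a c (Suc 0) = (-1)^a/2" "bb a c 2 = (-1)^c/2" "bb a c 3 = -((-1)^(a+c)/2)"
  by (simp_all add: bb_def bit_def pp_def sN_def power_add)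

lemma bb_complete:
  assumes "i < 4" "j < 4"
  shows "bb 0 0 i * bb 0 0 j + bb 0 1 i * bb 0 1 j + bb 1 0 i * bb 1 0 j + bb 1 1 i * bb 1 1 j = (if i = j then 1 else 0)"
proof -
  have "i \<in> {0,1,2,3}" "j \<in> {0,1,2,3}" using assms by auto
  then show ?thesis by (auto simp: bb_vals)
qed

lemma bb00: "bb 0 0 i = pp 2 i / 2" by (simp add: bb_def)

lemma purif2:
  assumes y: "y \<ge> -1"
  shows "purifiable (rho 2 y) \<longleftrightarrow> y > 2"
proof
  assume "purifiable (rho 2 y)"
  then obtain w where "rho 2 y = Smat w" "w 0 0 > 1/2" unfolding purifiable_Smat by blast
  then have "(1 + y) / (4 + y) > 1 / 2" using purif_only[OF _ y] by simp
  moreover have "4 + y > 0" using y by simp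
  ultimately show "y > 2" by (simp add: field_simps)
next
  assume y2: "y > 2"
  have p: "4 + y > 0" using y by simp
  define w :: "nat \<Rightarrow> nat \<Rightarrow> real" where "w = (\<lambda>a c. if a = 0 \<and> c = 0 then (1 + y) / (4 + y) else 1 / (4 + y))"
  have nn: "\<forall>a<2. \<forall>c<2. w a c \<ge> 0" using p y by (simp add: w_def)
  have w00: "w 0 0 > 1 / 2" using p y2 by (simp add: w_def field_simps)
  have eq: "rho 2 y = Smat w"
  proof (rule eq_matI)
    fix i j assume "i < dim_row (Smat w)" "j < dim_col (Smat w)"
    then have i: "i < 4" and j: "j < 4" by auto
    have r: "((if i = j then 1 else 0) + y * pp 2 i * pp 2 j / 4) / (4 + y) =
      w 0 0 * (bb 0 0 i * bb 0 0 j) + w 0 1 * (bb 0 1 i * bb 0 1 j) +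
      w 1 0 * (bb 1 0 i * bb 1 0 j) + w 1 1 * (bb 1 1 i * bb 1 1 j)"
    proof -
      define r where "r = 1 / (4 + y)"
      have wv: "w 0 0 = (1 + y) * r" "w 0 1 = r" "w 1 0 = r" "w 1 1 = r" unfolding w_def r_def by auto
      have "w 0 0 * (bb 0 0 i * bb 0 0 j) + w 0 1 * (bb 0 1 i * bb 0 1 j) +
        w 1 0 * (bb 1 0 i * bb 1 0 j) + w 1 1 * (bb 1 1 i * bb 1 1 j)
        = r * (bb 0 0 i * bb 0 0 j + bb 0 1 i * bb 0 1 j + bb 1 0 i * bb 1 0 j + bb 1 1 i * bb 1 1 j)
          + y * r * (bb 0 0 i * bb 0 0 j)"
        unfolding wv by (simp add: algebra_simps)
      also have "\<dots> = r * (if i = j then 1 else 0) + y * r * (pp 2 i * pp 2 j / 4)"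
      proof -
        have "bb 0 0 i * bb 0 0 j = pp 2 i * pp 2 j / 4" by (simp add: bb00)
        then show ?thesis unfolding bb_complete[OF i j] by simp
      qed
      also have "\<dots> = ((if i = j then 1 else 0) + y * (pp 2 i * pp 2 j / 4)) / (4 + y)"
        unfolding r_def by (simp add: add_divide_distrib)
      also have "\<dots> = ((if i = j then 1 else 0) + y * pp 2 i * pp 2 j / 4) / (4 + y)"
        by (simp add: mult.assoc)
      finally show ?thesis ..
    qed
    show "rho 2 y $$ (i,j) = Smat w $$ (i,j)"
      unfolding rho2_entry_real[OF i j] Smat_entry[OF i j] r ..
  qed auto
  show "purifiable (rho 2 y)" unfolding purifiable_Smat using nn eq w00 by blast
qed


lemma fid_arith:
  fixes pi pj s M x d :: real
  assumes "pi * pi = 1" "pj * pj = 1" "s * s = M" "M > 0" "M + x > 0" "d = 0 \<or> (d = 1 \<and> pi = pj)"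
  shows "(pi / s) * ((d + x * pi * pj / M) / (M + x)) * (pj / s) = (d + x / M) / (M * (M + x))"
proof -
  have s0: "s \<noteq> 0" using assms(3,4) by auto
  have "(pi / s) * ((d + x * pi * pj / M) / (M + x)) * (pj / s) = (pi * pj * d + x * (pi * pi) * (pj * pj) / M) / (M * (M + x))"
    using s0 assms(3,4,5) by (simp add: field_simps)
  also have "pi * pj * d = d" using assms(1,6) by auto
  finally show ?thesis using assms(1,2) by simp
qed

lemma sum_delta_const:
  fixes c K :: real
  assumes "i < n"
  shows "(\<Sum>j<n. ((if i = j then 1 else 0) + c) / K) = (1 + real n * c) / K"
  using assms by (simp add: sum_divide_distrib[symmetric] sum.distrib)

lemma fidelity_rho:
  assumes x: "x \<ge> -1" and N: "N \<ge> 1"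
  shows "fidelity (cluster_vec N) (rho N x) = (1 + x) / (2 ^ N + x)"
proof -
  define M :: real where "M = 2 ^ N"
  have M2: "M \<ge> 2" unfolding M_def using N
    by (metis One_nat_def power_increasing power_one_right one_le_numeral)
  have Mx: "M + x > 0" using M2 x by simp
  have tm: "cnj (cluster_vec N $ i) * rho N x $$ (i, j) * cluster_vec N $ j =
      of_real (((if i = j then 1 else 0) + x / M) / (M * (M + x)))"
    if i: "i < 2 ^ N" and j: "j < 2 ^ N" for i j
  proof -
    have "cnj (cluster_vec N $ i) * rho N x $$ (i, j) * cluster_vec N $ j =
      of_real ((pp N i / sqrt (2 ^ N)) * (((if i = j then 1 else 0) + x * pp N i * pp N j / 2 ^ N) / (2 ^ N + x)) * (pp N j / sqrt (2 ^ N)))"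
      unfolding cluster_entry[OF i] cluster_entry[OF j] rho_entry[OF i j] by simp
    also have "(pp N i / sqrt (2 ^ N)) * (((if i = j then 1 else 0) + x * pp N i * pp N j / 2 ^ N) / (2 ^ N + x)) * (pp N j / sqrt (2 ^ N))
      = ((if i = j then 1 else 0) + x / M) / (M * (M + x))"
      unfolding M_def[symmetric]
      by (rule fid_arith) (use pp_sq M2 Mx in \<open>auto simp: M_def\<close>)
    finally show ?thesis .
  qed
  have "fidelity (cluster_vec N) (rho N x) = Re (\<Sum>i<(2::nat) ^ N. \<Sum>j<(2::nat) ^ N. of_real (((if i = j then 1 else 0) + x / M) / (M * (M + x))))"
    unfolding fidelity_def dim_cluster by (simp add: tm)
  also have "\<dots> = (\<Sum>i<(2::nat) ^ N. \<Sum>j<(2::nat) ^ N. ((if i = j then 1 else 0) + x / M) / (M * (M + x)))"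
    by (simp only: of_real_sum[symmetric] Re_complex_of_real)
  also have "\<dots> = (\<Sum>i<(2::nat) ^ N. (1 + x) / (M * (M + x)))"
  proof (rule sum.cong)
    fix i assume "i \<in> {..<(2::nat) ^ N}"
    then have "(\<Sum>j<(2::nat) ^ N. ((if i = j then 1 else 0) + x / M) / (M * (M + x))) = (1 + real (2 ^ N) * (x / M)) / (M * (M + x))"
      by (intro sum_delta_const) simp
    also have "real (2 ^ N) * (x / M) = x" unfolding M_def by simp
    finally show "(\<Sum>j<(2::nat) ^ N. ((if i = j then 1 else 0) + x / M) / (M * (M + x))) = (1 + x) / (M * (M + x))" .
  qed simp
  also have "\<dots> = M * ((1 + x) / (M * (M + x)))" unfolding M_def by simp
  also have "\<dots> = (1 + x) / (M + x)" using M2 by simp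
  finally show ?thesis unfolding M_def .
qed


lemma seq_lemma:
  "\<forall>N x. 2 \<le> N \<longrightarrow> x \<ge> -1 \<longrightarrow> length bs = N - 2 \<longrightarrow> set bs \<subseteq> {0, 1} \<longrightarrow>
     zmeas_seq N bs (rho N x) = rho 2 (x / 2 ^ (N - 2))"
proof (induction bs)
  case Nil
  then show ?case by auto
next
  case (Cons b bs)
  show ?case
  proof (intro allI impI)
    fix N and x :: real
    assume N: "2 \<le> N" and x: "x \<ge> -1" and l: "length (b # bs) = N - 2" and s: "set (b # bs) \<subseteq> {0, 1}"
    obtain m where m: "N = Suc m" using N by (cases N) auto
    have m2: "2 \<le> m" using l m by simp
    have b: "b < 2" using s by auto
    have st: "zmeas_step N b (rho N x) = rho m (x / 2)"
      unfolding m by (rule step_lemma) (use m2 b x in auto)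
    have "zmeas_seq N (b # bs) (rho N x) = zmeas_seq m bs (rho m (x / 2))"
      using st m by simp
    also have "\<dots> = rho 2 (x / 2 / 2 ^ (m - 2))"
      using Cons.IH m2 x l s m by simp
    also have "x / 2 / 2 ^ (m - 2) = x / 2 ^ (N - 2)"
    proof -
      have "N - 2 = Suc (m - 2)" using m m2 by simp
      then show ?thesis by simp
    qed
    finally show "zmeas_seq N (b # bs) (rho N x) = rho 2 (x / 2 ^ (N - 2))" .
  qed
qed

lemma ineq:
  fixes K x :: real
  assumes K: "K \<ge> 2" and x: "x \<ge> -1"
  shows "(1 + x) / (2 * K + x) > 1 / 3 + 1 / (3 * K) \<longleftrightarrow> x > K"
proof -
  have p1: "2 * K + x > 0" using K x by simp
  have p2: "3 * K > 0" using K by simp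
  have "(1 + x) / (2 * K + x) - (1 / 3 + 1 / (3 * K)) = ((2 * K - 1) * (x - K)) / ((3 * K) * (2 * K + x))"
    using p1 p2 by (simp add: field_simps)
  moreover have a: "(2 * K - 1) > 0" using K by simp
  moreover have d: "(3 * K) * (2 * K + x) > 0" using p1 p2 by simp
  moreover have "((2 * K - 1) * (x - K)) / ((3 * K) * (2 * K + x)) > 0 \<longleftrightarrow> x - K > 0"
  proof
    assume "((2 * K - 1) * (x - K)) / ((3 * K) * (2 * K + x)) > 0"
    then have "(2 * K - 1) * (x - K) > 0" using d by (metis divide_pos_pos less_numeral_extra(3) mult_eq_0_iff zero_less_divide_iff order.asym)
    then show "x - K > 0" using a zero_less_mult_pos by blast
  next
    assume "x - K > 0"
    then show "((2 * K - 1) * (x - K)) / ((3 * K) * (2 * K + x)) > 0" using a d by simp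
  qed
  ultimately have "(1 + x) / (2 * K + x) - (1 / 3 + 1 / (3 * K)) > 0 \<longleftrightarrow> x - K > 0"
    by simp
  then show ?thesis by simp
qed


theorem mainTheorem7:
  fixes N :: nat and x :: real
  assumes "N \<ge> 2" and "x \<ge> -1"
  shows "(\<forall>b\<in>{0, 1}. zmeas_step N b (rho N x) = rho (N - 1) (x / 2))
    \<and> (\<forall>bs. length bs = N - 2 \<longrightarrow> set bs \<subseteq> {0, 1} \<longrightarrow>
          zmeas_seq N bs (rho N x) = rho 2 (x / 2 ^ (N - 2)))
    \<and> (purifiable (rho 2 (x / 2 ^ (N - 2))) \<longleftrightarrow>
          fidelity (cluster_vec N) (rho N x) > 1 / 3 + 1 / (3 * 2 ^ (N - 1)))"
proof (intro conjI)
  obtain m where m: "N = Suc m" using assms(1) by (cases N) auto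
  have m1: "1 \<le> m" using assms(1) m by simp
  show "\<forall>b\<in>{0, 1}. zmeas_step N b (rho N x) = rho (N - 1) (x / 2)"
  proof
    fix b :: nat assume "b \<in> {0, 1}"
    then have b: "b < 2" by auto
    show "zmeas_step N b (rho N x) = rho (N - 1) (x / 2)"
      unfolding m using step_lemma[OF m1 b assms(2)] by simp
  qed
  show "\<forall>bs. length bs = N - 2 \<longrightarrow> set bs \<subseteq> {0, 1} \<longrightarrow>
          zmeas_seq N bs (rho N x) = rho 2 (x / 2 ^ (N - 2))"
    using seq_lemma assms by blast
  define K :: real where "K = 2 ^ (N - 1)"
  have NK: "(2::real) ^ N = 2 * K" unfolding K_def m by simp
  have K2: "(2::real) ^ (N - 2) * 2 = K" unfolding K_def using assms(1)
    by (metis Suc_diff_Suc Suc_1 diff_Suc_1 less_le_trans lessI power_Suc2)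
  have Kge: "K \<ge> 2" unfolding K_def using m1 m
    by (metis One_nat_def diff_Suc_1 power_increasing power_one_right one_le_numeral)
  have d: "(2::real) ^ (N - 2) > 0" by simp
  have y: "x / 2 ^ (N - 2) \<ge> -1"
  proof -
    have "(2::real) ^ (N - 2) \<ge> 1" by simp
    then have "- (2 ^ (N - 2)) \<le> x" using assms(2) by linarith
    then show ?thesis using d by (simp add: le_divide_eq)
  qed
  have "purifiable (rho 2 (x / 2 ^ (N - 2))) \<longleftrightarrow> x / 2 ^ (N - 2) > 2"
    by (rule purif2[OF y])
  also have "\<dots> \<longleftrightarrow> x > K" using d K2 by (simp add: less_divide_eq mult.commute)
  also have "\<dots> \<longleftrightarrow> (1 + x) / (2 * K + x) > 1 / 3 + 1 / (3 * K)" using ineq[OF Kge assms(2)] by simp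
  also have "(1 + x) / (2 * K + x) = fidelity (cluster_vec N) (rho N x)"
    using fidelity_rho[OF assms(2)] m1 m NK by simp
  also have "3 * K = 3 * 2 ^ (N - 1)" unfolding K_def ..
  finally show "purifiable (rho 2 (x / 2 ^ (N - 2))) \<longleftrightarrow>
          fidelity (cluster_vec N) (rho N x) > 1 / 3 + 1 / (3 * 2 ^ (N - 1))" .
qed

end
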